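(* Let $I$ be an ideal on $\mathbb{N}$ with $\mathrm{Fin}\subseteq I$ and $I\neq\mathrm{Fin}$. The following are equivalent: (1) there exists a sequence $(x_n)\in\ell_1^{*}$ such that $A_I(x_n)$ is an open subset of $\mathbb{R}$; (2) $I$ is not maximal.
   Context: $\ell_1^{*}=\{(x_n)\in\ell_1 : x_n\neq 0\text{ for every }n\}$. An ideal on $\mathbb{N}$ is a family $I\subseteq P(\mathbb{N})$ closed under finite unions and subsets with $\mathbb{N}\notin I$; $\mathrm{Fin}$ is the ideal of finite sets. An ideal $I$ is maximal if there is no ideal $J$ with $I\subsetneq J$; equivalently, for every $A\subseteq\mathbb{N}$ either $A\in I$ or $\mathbb{N}\setminus A\in I$. $A_I(x_n)=\{\sum_{n\in A}x_n : A\in I\}$. *)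

theory Defs
  imports "HOL-Analysis.Analysis"
begin

definition is_ideal :: "nat set set \<Rightarrow> bool" where
  "is_ideal I \<longleftrightarrow>
     (\<forall>A\<in>I. \<forall>B\<in>I. A \<union> B \<in> I) \<and>
     (\<forall>A\<in>I. \<forall>B. B \<subseteq> A \<longrightarrow> B \<in> I) \<and>
     UNIV \<notin> I"

definition Fin :: "nat set set" where
  "Fin = {A. finite A}"

definition maximal_ideal :: "nat set set \<Rightarrow> bool" where
  "maximal_ideal I \<longleftrightarrow> is_ideal I \<and> \<not> (\<exists>J. is_ideal J \<and> I \<subset> J)"

definition ell1_star :: "(nat \<Rightarrow> real) set" where
  "ell1_star = {x. summable (\<lambda>n. \<bar>x n\<bar>) \<and> (\<forall>n. x n \<noteq> 0)}"

text \<open>Subsum over A (the series is absolutely convergent for x in ell_1).\<close>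
definition subsum :: "(nat \<Rightarrow> real) \<Rightarrow> nat set \<Rightarrow> real" where
  "subsum x A = (\<Sum>n. if n \<in> A then x n else 0)"

definition A_I :: "nat set set \<Rightarrow> (nat \<Rightarrow> real) \<Rightarrow> real set" where
  "A_I I x = {subsum x A | A. A \<in> I}"

end

theory Submission
  imports Defs
begin


lemma floor_double: fixes y :: real
  shows "\<lfloor>2*y\<rfloor> = 2*\<lfloor>y\<rfloor> + (if odd \<lfloor>2*y\<rfloor> then 1 else 0)"
proof -
  have a: "2*\<lfloor>y\<rfloor> \<le> \<lfloor>2*y\<rfloor>"
    by (subst le_floor_iff) linarith
  have b: "\<lfloor>2*y\<rfloor> \<le> 2*\<lfloor>y\<rfloor> + 1"
  proof -
    have "y < \<lfloor>y\<rfloor> + 1" by linarith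
    hence "2*y < 2*\<lfloor>y\<rfloor> + 2" by linarith
    thus ?thesis by linarith
  qed
  from a b have "\<lfloor>2*y\<rfloor> = 2*\<lfloor>y\<rfloor> \<or> \<lfloor>2*y\<rfloor> = 2*\<lfloor>y\<rfloor> + 1" by linarith
  thus ?thesis by auto
qed

lemma binary_partial:
  fixes t :: real
  shows "(\<Sum>k<n. if odd \<lfloor>t * 2^Suc k\<rfloor> then (1/2::real)^Suc k else 0)
          = \<lfloor>t * 2^n\<rfloor> / 2^n - \<lfloor>t\<rfloor>"
proof (induction n)
  case 0 then show ?case by simp
next
  case (Suc n)
  have e: "t * 2^Suc n = 2*(t*2^n)" by simp
  have fd: "real_of_int \<lfloor>t * 2^Suc n\<rfloor> = 2*\<lfloor>t*2^n\<rfloor> + (if odd \<lfloor>t * 2^Suc n\<rfloor> then 1 else 0)"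
    unfolding e by (subst floor_double) simp
  have "(\<Sum>k<Suc n. if odd \<lfloor>t * 2^Suc k\<rfloor> then (1/2::real)^Suc k else 0)
     = \<lfloor>t * 2^n\<rfloor> / 2^n - \<lfloor>t\<rfloor> + (if odd \<lfloor>t * 2^Suc n\<rfloor> then (1/2::real)^Suc n else 0)"
    using Suc by simp
  also have "\<dots> = \<lfloor>t * 2^Suc n\<rfloor> / 2^Suc n - \<lfloor>t\<rfloor>"
    apply (subst fd)
    by (auto simp: field_simps power_divide)
  finally show ?case .
qed

lemma binary_exists:
  fixes t :: real
  assumes "0 \<le> t" "t \<le> 1"
  shows "\<exists>T. (\<lambda>k. if k \<in> T then (1/2::real)^Suc k else 0) sums t"
proof (cases "t = 1")
  case True
  then show ?thesis using power_half_series by (intro exI[of _ UNIV]) simp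
next
  case False
  with assms have fl: "\<lfloor>t\<rfloor> = 0" by (simp add: floor_eq_iff)
  define T where "T = {k. odd \<lfloor>t * 2^Suc k\<rfloor>}"
  have "(\<lambda>n. \<lfloor>t * 2^n\<rfloor> / 2^n) \<longlonglongrightarrow> t"
  proof (rule real_tendsto_sandwich[where f="\<lambda>n. t - (1/2)^n" and h="\<lambda>n. t"])
    show "\<forall>\<^sub>F n in sequentially. t - (1/2)^n \<le> \<lfloor>t * 2^n\<rfloor> / 2^n"
    proof (intro always_eventually allI)
      fix n :: nat
      have "t*2^n - 1 \<le> \<lfloor>t * 2^n\<rfloor>" by linarith
      hence "(t*2^n - 1)/2^n \<le> \<lfloor>t * 2^n\<rfloor> / 2^n" by (simp add: divide_right_mono)
      thus "t - (1/2)^n \<le> \<lfloor>t * 2^n\<rfloor> / 2^n" by (simp add: field_simps power_divide)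
    qed
    show "\<forall>\<^sub>F n in sequentially. \<lfloor>t * 2^n\<rfloor> / 2^n \<le> t"
    proof (intro always_eventually allI)
      fix n :: nat
      have "\<lfloor>t * 2^n\<rfloor> \<le> t*2^n" by linarith
      thus "\<lfloor>t * 2^n\<rfloor> / 2^n \<le> t" by (simp add: field_simps)
    qed
    have "(\<lambda>n. t - (1/2::real)^n) \<longlonglongrightarrow> t - 0"
      by (intro tendsto_intros) simp
    thus "(\<lambda>n. t - (1/2::real)^n) \<longlonglongrightarrow> t" by simp
    show "(\<lambda>n. t) \<longlonglongrightarrow> t" by simp
  qed
  then have "(\<lambda>n. \<Sum>k<n. if k \<in> T then (1/2::real)^Suc k else 0) \<longlonglongrightarrow> t"
    unfolding T_def using binary_partial[of t] fl by simp
  then show ?thesis unfolding sums_def by blast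
qed

lemma summ_ind:
  fixes x :: "nat \<Rightarrow> real"
  assumes "summable (\<lambda>n. \<bar>x n\<bar>)"
  shows "summable (\<lambda>n. if n \<in> X then x n else 0)"
  by (rule summable_comparison_test[OF _ assms]) auto

lemma subsum_union:
  fixes x :: "nat \<Rightarrow> real"
  assumes "summable (\<lambda>n. \<bar>x n\<bar>)" "X \<inter> Y = {}"
  shows "subsum x (X \<union> Y) = subsum x X + subsum x Y"
proof -
  have "(\<lambda>n. if n \<in> X \<union> Y then x n else 0) = (\<lambda>n. (if n \<in> X then x n else 0) + (if n \<in> Y then x n else 0))"
    using assms(2) by (intro ext) auto
  thus ?thesis unfolding subsum_def
    using suminf_add[OF summ_ind[OF assms(1), of X] summ_ind[OF assms(1), of Y]] by simp
qed

lemma subsum_single: "subsum x {a} = x a"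
proof -
  have "(\<lambda>n. if n \<in> {a} then x n else 0) = (\<lambda>n. if n = a then x n else 0)" by auto
  thus ?thesis unfolding subsum_def using sums_single[of a x] sums_unique by metis
qed

lemma maximal_dich:
  assumes "maximal_ideal I" and emp: "{} \<in> I"
  shows "A \<in> I \<or> -A \<in> I"
proof (rule ccontr)
  assume n: "\<not> (A \<in> I \<or> -A \<in> I)"
  have id: "is_ideal I" using assms unfolding maximal_ideal_def by simp
  define J where "J = {B. \<exists>C\<in>I. B \<subseteq> C \<union> A}"
  have "is_ideal J" unfolding is_ideal_def
  proof (intro conjI ballI allI impI)
    fix B1 B2 assume "B1 \<in> J" "B2 \<in> J"
    then obtain C1 C2 where "C1 \<in> I" "C2 \<in> I" "B1 \<subseteq> C1 \<union> A" "B2 \<subseteq> C2 \<union> A" unfolding J_def by auto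
    moreover have "C1 \<union> C2 \<in> I" using id calculation unfolding is_ideal_def by blast
    ultimately show "B1 \<union> B2 \<in> J" unfolding J_def by blast
  next
    fix B1 B assume "B1 \<in> J" "B \<subseteq> B1"
    thus "B \<in> J" unfolding J_def by blast
  next
    show "UNIV \<notin> J"
    proof
      assume "UNIV \<in> J"
      then obtain C where "C \<in> I" "UNIV \<subseteq> C \<union> A" unfolding J_def by auto
      hence "-A \<subseteq> C" by auto
      hence "-A \<in> I" using \<open>C \<in> I\<close> id unfolding is_ideal_def by blast
      with n show False by simp
    qed
  qed
  moreover have "I \<subset> J"
  proof -
    have "I \<subseteq> J" unfolding J_def by blast
    moreover have "A \<in> J" unfolding J_def using emp by blast
    ultimately show ?thesis using n by blast
  qed
  ultimately show False using assms unfolding maximal_ideal_def by blast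
qed

lemma forward:
  fixes x :: "nat \<Rightarrow> real"
  assumes sx: "summable (\<lambda>n. \<bar>x n\<bar>)" and dich: "\<And>A. A \<in> I \<or> -A \<in> I"
    and op: "open (A_I I x)"
  shows False
proof -
  define P where "P = {n. 0 < x n}"
  have upper: "subsum x B \<le> subsum x P" for B
    using summ_ind[OF sx, of B] summ_ind[OF sx, of P] unfolding subsum_def
    by (intro suminf_le) (auto simp: P_def)
  have lower: "subsum x (-P) \<le> subsum x B" for B
    using summ_ind[OF sx, of B] summ_ind[OF sx, of "-P"] unfolding subsum_def
    by (intro suminf_le) (auto simp: P_def)
  show False
  proof (cases "P \<in> I")
    case True
    hence m: "subsum x P \<in> A_I I x" unfolding A_I_def by blast
    then obtain e where e: "e > 0" "ball (subsum x P) e \<subseteq> A_I I x"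
      using op open_contains_ball by blast
    have "subsum x P + e/2 \<in> ball (subsum x P) e" using e by (simp add: dist_real_def)
    hence "subsum x P + e/2 \<in> A_I I x" using e(2) by (rule subsetD[rotated])
    then obtain B where "subsum x P + e/2 = subsum x B" unfolding A_I_def by auto
    with upper[of B] e show False by simp
  next
    case False
    hence "-P \<in> I" using dich by blast
    hence m: "subsum x (-P) \<in> A_I I x" unfolding A_I_def by blast
    then obtain e where e: "e > 0" "ball (subsum x (-P)) e \<subseteq> A_I I x"
      using op open_contains_ball by blast
    have "subsum x (-P) - e/2 \<in> ball (subsum x (-P)) e" using e by (simp add: dist_real_def)
    hence "subsum x (-P) - e/2 \<in> A_I I x" using e(2) by (rule subsetD[rotated])
    then obtain B where "subsum x (-P) - e/2 = subsum x B" unfolding A_I_def by auto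
    with lower[of B] e show False by simp
  qed
qed


lemma ideal_un: "is_ideal I \<Longrightarrow> X \<in> I \<Longrightarrow> Y \<in> I \<Longrightarrow> X \<union> Y \<in> I"
  unfolding is_ideal_def by blast
lemma ideal_sub: "is_ideal I \<Longrightarrow> X \<in> I \<Longrightarrow> Y \<subseteq> X \<Longrightarrow> Y \<in> I"
  unfolding is_ideal_def by blast

lemma subsum_empty: "subsum x {} = 0" unfolding subsum_def by simp

lemma backward:
  assumes id: "is_ideal I" and fin: "Fin \<subseteq> I" and CI: "C \<in> I" and Cinf: "infinite C"
    and AI: "A \<notin> I" and cAI: "-A \<notin> I"
  shows "\<exists>x\<in>ell1_star. open (A_I I x)"
proof -
  define g where "g = enumerate C"
  have ginj: "inj g" unfolding g_def using inj_enumerate[OF Cinf] .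
  have grange: "range g = C" unfolding g_def using range_enumerate[OF Cinf] .
  have gsm: "strict_mono g" unfolding g_def using strict_mono_enumerate[OF Cinf] .
  define x where "x n = (if n \<in> C then (1/2::real)^Suc (inv g n)
     else if n \<in> A then (1/2)^(n+2) else -((1/2::real)^(n+2)))" for n
  have xg: "x (g k) = (1/2)^Suc k" for k
  proof -
    have "g k \<in> C" using grange by blast
    thus ?thesis unfolding x_def using inv_f_f[OF ginj] by simp
  qed
  have reidx: "(\<lambda>n. if n \<in> g`T then x n else 0) sums s \<longleftrightarrow>
      (\<lambda>k. if k \<in> T then (1/2::real)^Suc k else 0) sums s" for T s
  proof -
    have "(\<lambda>k. if g k \<in> g`T then x (g k) else 0) = (\<lambda>k. if k \<in> T then (1/2::real)^Suc k else 0)"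
      using xg inj_image_mem_iff[OF ginj] by (intro ext) auto
    moreover have "(\<lambda>k. if g k \<in> g`T then x (g k) else 0) sums s \<longleftrightarrow>
        (\<lambda>n. if n \<in> g`T then x n else 0) sums s"
      by (rule sums_mono_reindex[OF gsm]) auto
    ultimately show ?thesis by simp
  qed
  have sC: "(\<lambda>n. if n \<in> C then x n else 0) sums 1"
    using reidx[of UNIV 1] power_half_series grange by simp
  have sx: "summable (\<lambda>n. \<bar>x n\<bar>)"
  proof (rule summable_comparison_test)
    show "summable (\<lambda>n. (if n \<in> C then x n else 0) + (1/2::real)^(n+2))"
      using sC by (intro summable_add) (auto simp: sums_summable summable_geometric)
    show "\<exists>N. \<forall>n\<ge>N. norm \<bar>x n\<bar> \<le> (if n \<in> C then x n else 0) + (1/2::real)^(n+2)"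
      by (auto simp: x_def)
  qed
  have xnz: "x n \<noteq> 0" for n by (simp add: x_def)
  have xC: "n \<in> C \<Longrightarrow> 0 < x n" for n by (simp add: x_def)
  have interval: "\<exists>S\<subseteq>C. subsum x S = t" if t01: "0 \<le> t" "t \<le> 1" for t
  proof -
    obtain T where T: "(\<lambda>k. if k \<in> T then (1/2::real)^Suc k else 0) sums t"
      using binary_exists[OF t01] by blast
    hence "subsum x (g`T) = t" unfolding subsum_def using reidx sums_unique by metis
    moreover have "g`T \<subseteq> C" using grange by blast
    ultimately show ?thesis by blast
  qed
  have bound: "0 \<le> subsum x S \<and> subsum x S \<le> 1" if "S \<subseteq> C" for S
  proof
    show "0 \<le> subsum x S" unfolding subsum_def
      using xC that by (intro suminf_nonneg summ_ind[OF sx]) (auto simp: less_imp_le subset_iff)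
    have "subsum x S \<le> subsum x C" unfolding subsum_def
      using xC that summ_ind[OF sx, of S] summ_ind[OF sx, of C] by (intro suminf_le) (auto simp: less_imp_le subset_iff)
    also have "subsum x C = 1" unfolding subsum_def using sC sums_unique by metis
    finally show "subsum x S \<le> 1" .
  qed
  have "open (A_I I x)"
    unfolding open_contains_ball
  proof
    fix m assume "m \<in> A_I I x"
    then obtain D where D: "D \<in> I" "m = subsum x D" unfolding A_I_def by auto
    have CD: "C \<union> D \<in> I" using ideal_un[OF id CI D(1)] .
    obtain a where a: "a \<in> A" "a \<notin> C \<union> D"
    proof -
      have "\<not> A \<subseteq> C \<union> D" using ideal_sub[OF id CD] AI by blast
      thus ?thesis using that by blast
    qed
    obtain b where b: "b \<in> -A" "b \<notin> C \<union> D"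
    proof -
      have "\<not> -A \<subseteq> C \<union> D" using ideal_sub[OF id CD] cAI by blast
      thus ?thesis using that by blast
    qed
    have h4: "(1/2::real)^n \<le> 4" for n using power_le_one[of "1/2::real" n] by simp
    have xa: "0 < x a" "x a \<le> 1" using a h4[of a] by (auto simp: x_def)
    have xb: "x b < 0" "-1 \<le> x b" using b h4[of b] by (auto simp: x_def)
    define v where "v = subsum x (D - C)"
    define u where "u = subsum x (D \<inter> C)"
    have mvu: "m = v + u" unfolding D(2) v_def u_def
      using subsum_union[OF sx, of "D - C" "D \<inter> C"] by (simp add: Un_Diff_Int Diff_Int_distrib2 Int_assoc)
    have u01: "0 \<le> u" "u \<le> 1" using bound[of "D \<inter> C"] unfolding u_def by auto
    have key: "v + t + subsum x F \<in> A_I I x"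
      if t: "0 \<le> t" "t \<le> 1" and F: "F \<subseteq> {a, b}" for t F
    proof -
      obtain S where S: "S \<subseteq> C" "subsum x S = t" using interval[OF t] by blast
      have Ff: "F \<in> I" using fin F finite_subset[OF F] unfolding Fin_def by auto
      have FD: "F \<inter> (C \<union> D) = {}" using F a b by auto
      have "(D - C) \<union> S \<in> I"
        using ideal_un[OF id ideal_sub[OF id D(1)] ideal_sub[OF id CI S(1)]] by blast
      hence DI: "(D - C) \<union> S \<union> F \<in> I" using ideal_un[OF id _ Ff] by blast
      have "subsum x ((D - C) \<union> S \<union> F) = subsum x ((D - C) \<union> S) + subsum x F"
        using FD S(1) by (intro subsum_union[OF sx]) auto
      also have "subsum x ((D - C) \<union> S) = v + t"
        unfolding v_def S(2)[symmetric] by (intro subsum_union[OF sx]) (use S(1) in auto)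
      finally show ?thesis using DI unfolding A_I_def by force
    qed
    define e where "e = min (x a) (- x b)"
    have "e > 0" using xa xb unfolding e_def by simp
    moreover have "ball m e \<subseteq> A_I I x"
    proof
      fix y assume "y \<in> ball m e"
      hence y: "\<bar>y - m\<bar> < e" by (simp add: dist_real_def abs_minus_commute)
      consider "0 \<le> y - v" "y - v \<le> 1" | "1 < y - v" | "y - v < 0" by linarith
      then show "y \<in> A_I I x"
      proof cases
        case 1
        from key[OF 1, of "{}"] show ?thesis by (simp add: subsum_empty)
      next
        case 2
        have "0 \<le> y - v - x a" "y - v - x a \<le> 1"
          using 2 y mvu u01 xa unfolding e_def by auto
        from key[OF this, of "{a}"] show ?thesis by (simp add: subsum_single)
      next
        case 3
        have "0 \<le> y - v - x b" "y - v - x b \<le> 1"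
          using 3 y mvu u01 xb unfolding e_def by auto
        from key[OF this, of "{b}"] show ?thesis by (simp add: subsum_single)
      qed
    qed
    ultimately show "\<exists>e>0. ball m e \<subseteq> A_I I x" by blast
  qed
  moreover have "x \<in> ell1_star" unfolding ell1_star_def using sx xnz by simp
  ultimately show ?thesis by blast
qed

theorem mainTheorem14:
  fixes I :: "nat set set"
  assumes "is_ideal I" and "Fin \<subseteq> I" and "I \<noteq> Fin"
  shows "(\<exists>x\<in>ell1_star. open (A_I I x)) \<longleftrightarrow> \<not> maximal_ideal I"
proof
  assume "\<exists>x\<in>ell1_star. open (A_I I x)"
  then obtain x where x: "x \<in> ell1_star" "open (A_I I x)" by blast
  show "\<not> maximal_ideal I"
  proof
    assume m: "maximal_ideal I"
    have e: "{} \<in> I" using assms(2) unfolding Fin_def by auto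
    show False
      using forward[of x I] x maximal_dich[OF m e] unfolding ell1_star_def by blast
  qed
next
  assume nm: "\<not> maximal_ideal I"
  then obtain J where J: "is_ideal J" "I \<subset> J" using assms(1) unfolding maximal_ideal_def by blast
  then obtain B where B: "B \<in> J" "B \<notin> I" by blast
  have "-B \<notin> I"
  proof
    assume "-B \<in> I"
    hence "-B \<in> J" using J by blast
    hence "B \<union> -B \<in> J" using ideal_un[OF J(1) B(1)] by blast
    thus False using J(1) unfolding is_ideal_def by simp
  qed
  moreover obtain C where "C \<in> I" "infinite C"
    using assms(2,3) unfolding Fin_def by blast
  ultimately show "\<exists>x\<in>ell1_star. open (A_I I x)"
    using backward[OF assms(1,2) _ _ B(2)] by blast
qed

end
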